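(* For every graph $G$ with $\chi(G)>3$, $W(G)>\frac{1}{16}\,g(G)$.
   Context: $\chi(G)$ is the chromatic number and $g(G)$ the girth (minimum length of a cycle) of $G$; $K_3$ is the complete graph on 3 vertices. Graphs are viewed as structures with adjacency relation $E$ and equality. For a graph $G$ with $\chi(G)>3$, $W(G)$ is the least $k$ such that some existential-positive first-order sentence (built from atomic formulas $x=y$, $E(x,y)$ using only $\wedge$, $\vee$ and $\exists$) in which at most $k$ distinct variables occur is true in $G$ and false in $K_3$. Equivalently, $W(G)$ is the least $k$ such that for some $r$ Spoiler has a winning strategy in the $r$-round $k$-width 3-coloring game on $G$: in each round Spoiler may erase the colors of some colored vertices and then selects a vertex, which Duplicator colors red, blue or green; at most $k$ vertices may be colored after each round; Duplicator wins if after every round the partial coloring is proper. *)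

theory Defs
  imports Complex_Main
begin

definition graph :: "'a set \<Rightarrow> ('a \<Rightarrow> 'a \<Rightarrow> bool) \<Rightarrow> bool" where
  "graph V E \<longleftrightarrow> finite V \<and> (\<forall>u v. E u v \<longrightarrow> u \<in> V \<and> v \<in> V)
     \<and> (\<forall>u v. E u v \<longrightarrow> E v u) \<and> (\<forall>v. \<not> E v v)"

definition chromatic_number :: "'a set \<Rightarrow> ('a \<Rightarrow> 'a \<Rightarrow> bool) \<Rightarrow> nat" where
  "chromatic_number V E = (LEAST k. \<exists>f. (\<forall>v\<in>V. f v < k) \<and>
       (\<forall>u\<in>V. \<forall>v\<in>V. E u v \<longrightarrow> f u \<noteq> f v))"

definition is_cycle :: "'a set \<Rightarrow> ('a \<Rightarrow> 'a \<Rightarrow> bool) \<Rightarrow> 'a list \<Rightarrow> bool" where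
  "is_cycle V E cs \<longleftrightarrow> length cs \<ge> 3 \<and> distinct cs \<and> set cs \<subseteq> V \<and>
     (\<forall>i < length cs. E (cs ! i) (cs ! ((i + 1) mod length cs)))"

definition girth :: "'a set \<Rightarrow> ('a \<Rightarrow> 'a \<Rightarrow> bool) \<Rightarrow> nat" where
  "girth V E = (LEAST n. \<exists>cs. is_cycle V E cs \<and> length cs = n)"

definition proper_partial :: "('a \<Rightarrow> 'a \<Rightarrow> bool) \<Rightarrow> ('a \<Rightarrow> nat option) \<Rightarrow> bool" where
  "proper_partial E p \<longleftrightarrow> (\<forall>u\<in>dom p. \<forall>v\<in>dom p. E u v \<longrightarrow> p u \<noteq> p v)"

text \<open>spoiler_wins V E k r p: from position p (current partial colouring), Spoiler
  can force a non-proper colouring within r rounds of the k-width 3-colouring game.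
  In each round Spoiler erases a set S of coloured vertices, then selects a vertex v;
  at most k vertices may be coloured afterwards; Duplicator colours v with 0, 1 or 2.\<close>
fun spoiler_wins :: "'a set \<Rightarrow> ('a \<Rightarrow> 'a \<Rightarrow> bool) \<Rightarrow> nat \<Rightarrow> nat \<Rightarrow> ('a \<Rightarrow> nat option) \<Rightarrow> bool" where
  "spoiler_wins V E k 0 p = False"
| "spoiler_wins V E k (Suc r) p =
     (\<exists>S v. S \<subseteq> dom p \<and> v \<in> V \<and> card (insert v (dom p - S)) \<le> k \<and>
        (\<forall>c \<in> {0, 1, 2::nat}.
           \<not> proper_partial E ((p |` (- S))(v \<mapsto> c)) \<or>
           spoiler_wins V E k r ((p |` (- S))(v \<mapsto> c))))"

definition W :: "'a set \<Rightarrow> ('a \<Rightarrow> 'a \<Rightarrow> bool) \<Rightarrow> nat" where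
  "W V E = (LEAST k. \<exists>r. spoiler_wins V E k r Map.empty)"

end

theory Submission
  imports Defs
begin


definition acyc :: "'a set \<Rightarrow> ('a \<Rightarrow> 'a \<Rightarrow> bool) \<Rightarrow> 'a set \<Rightarrow> bool" where
  "acyc V E Y \<longleftrightarrow> (\<forall>cs. is_cycle V E cs \<longrightarrow> \<not> set cs \<subseteq> Y)"

lemma leaf:
  assumes G: "graph V E" and fin: "finite Y" and YV: "Y \<subseteq> V" and ne: "Y \<noteq> {}"
    and ac: "acyc V E Y"
  shows "\<exists>x\<in>Y. card {y\<in>Y. E x y} \<le> 1"
proof (rule ccontr)
  assume "\<not> ?thesis"
  hence deg: "\<forall>x\<in>Y. 2 \<le> card {y\<in>Y. E x y}" by force
  have sym: "\<And>u v. E u v \<Longrightarrow> E v u" and irr: "\<And>v. \<not> E v v"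
    using G unfolding graph_def by auto
  define P where "P = (\<lambda>ps. ps \<noteq> [] \<and> distinct ps \<and> set ps \<subseteq> Y \<and>
      (\<forall>i. Suc i < length ps \<longrightarrow> E (ps!i) (ps!Suc i)))"
  obtain y0 where y0: "y0 \<in> Y" using ne by blast
  have P0: "P [y0]" using y0 unfolding P_def by auto
  have bnd: "\<forall>ps. P ps \<longrightarrow> length ps < Suc (card Y)"
  proof (intro allI impI)
    fix ps assume "P ps"
    hence "distinct ps" "set ps \<subseteq> Y" unfolding P_def by auto
    hence "card (set ps) \<le> card Y" using fin card_mono by blast
    thus "length ps < Suc (card Y)" using distinct_card[OF \<open>distinct ps\<close>] by simp
  qed
  obtain ps where Pps: "P ps" and mx: "\<forall>qs. P qs \<longrightarrow> length qs \<le> length ps"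
    using ex_has_greatest_nat[of P "[y0]" length "Suc (card Y)", OF P0 bnd] by blast
  have psne: "ps \<noteq> []" and dps: "distinct ps" and sps: "set ps \<subseteq> Y"
    and eps: "\<And>i. Suc i < length ps \<Longrightarrow> E (ps!i) (ps!Suc i)"
    using Pps unfolding P_def by auto
  define x where "x = ps!0"
  have xY: "x \<in> Y" using psne sps x_def by (simp add: subset_iff)
  define N where "N = {y\<in>Y. E x y}"
  have "2 \<le> card N" using deg xY N_def by auto
  have "N - {ps!1} \<noteq> {}"
  proof
    assume "N - {ps!1} = {}"
    hence "N \<subseteq> {ps!1}" by blast
    hence "card N \<le> 1" using card_mono[of "{ps!1}" N] by simp
    thus False using \<open>2 \<le> card N\<close> by simp
  qed
  then obtain y where yN: "y \<in> N" and y1: "y \<noteq> ps!1" by blast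
  have yY: "y \<in> Y" and Exy: "E x y" using yN N_def by auto
  have yx: "y \<noteq> x" using Exy irr by auto
  show False
  proof (cases "y \<in> set ps")
    case False
    have "P (y # ps)" unfolding P_def
    proof (intro conjI allI impI)
      show "distinct (y # ps)" using False dps by simp
      show "set (y # ps) \<subseteq> Y" using yY sps by simp
      fix i assume i: "Suc i < length (y # ps)"
      show "E ((y # ps) ! i) ((y # ps) ! Suc i)"
      proof (cases i)
        case 0 thus ?thesis using sym[OF Exy] x_def by simp
      next
        case (Suc j) thus ?thesis using eps i by simp
      qed
    qed simp
    thus False using mx by fastforce
  next
    case True
    then obtain i where il: "i < length ps" and yi: "ps!i = y" by (metis in_set_conv_nth)
    have i0: "i \<noteq> 0" using yi yx x_def by (metis)
    have i1: "i \<noteq> 1" using yi y1 by auto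
    define cs where "cs = take (Suc i) ps"
    have lcs: "length cs = Suc i" using il cs_def by simp
    have "is_cycle V E cs" unfolding is_cycle_def
    proof (intro conjI allI impI)
      show "3 \<le> length cs" using lcs i0 i1 by simp
      show "distinct cs" using dps cs_def by simp
      show "set cs \<subseteq> V" using sps YV cs_def set_take_subset by fastforce
      fix j assume j: "j < length cs"
      show "E (cs ! j) (cs ! ((j + 1) mod length cs))"
      proof (cases "j = i")
        case True
        hence "(j+1) mod length cs = 0" using lcs by simp
        thus ?thesis using True cs_def yi x_def sym[OF Exy] by simp
      next
        case False
        hence jl: "j < i" using j lcs by simp
        hence "(j+1) mod length cs = Suc j" using lcs by simp
        thus ?thesis using jl cs_def eps il by simp
      qed
    qed
    moreover have "set cs \<subseteq> Y" using sps cs_def set_take_subset by fastforce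
    ultimately show False using ac unfolding acyc_def by blast
  qed
qed



lemma acyc_mono: "acyc V E Y \<Longrightarrow> Z \<subseteq> Y \<Longrightarrow> acyc V E Z"
  unfolding acyc_def by blast

lemma degsum:
  assumes G: "graph V E"
  shows "finite Y \<Longrightarrow> Y \<subseteq> V \<Longrightarrow> Y \<noteq> {} \<Longrightarrow> acyc V E Y \<Longrightarrow>
    (\<Sum>x\<in>Y. card {y\<in>Y. E x y}) + 2 \<le> 2 * card Y"
proof (induction "card Y" arbitrary: Y rule: less_induct)
  case less
  have sym: "\<And>u v. E u v \<Longrightarrow> E v u" and irr: "\<And>v. \<not> E v v"
    using G unfolding graph_def by auto
  obtain x where xY: "x \<in> Y" and dx: "card {y\<in>Y. E x y} \<le> 1"
    using leaf[OF G less.prems] by blast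
  show ?case
  proof (cases "Y = {x}")
    case True
    thus ?thesis using irr by simp
  next
    case False
    define Y' where "Y' = Y - {x}"
    have ne': "Y' \<noteq> {}" using False xY Y'_def by blast
    have fin': "finite Y'" using less.prems Y'_def by simp
    have lt: "card Y' < card Y" using xY less.prems(1) Y'_def by (metis card_Diff1_less)
    have IH: "(\<Sum>z\<in>Y'. card {y\<in>Y'. E z y}) + 2 \<le> 2 * card Y'"
      using less.hyps[OF lt fin'] less.prems ne' acyc_mono[of V E Y Y'] Y'_def by blast
    have split: "\<And>z. z \<in> Y' \<Longrightarrow> card {y\<in>Y. E z y} = card {y\<in>Y'. E z y} + (if E z x then 1 else 0)"
    proof -
      fix z assume z: "z \<in> Y'"
      have eq: "{y\<in>Y. E z y} = {y\<in>Y'. E z y} \<union> (if E z x then {x} else {})"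
        using xY Y'_def by auto
      have fin2: "finite {y\<in>Y'. E z y}" using fin' by simp
      have "x \<notin> {y\<in>Y'. E z y}" using Y'_def by simp
      thus "card {y\<in>Y. E z y} = card {y\<in>Y'. E z y} + (if E z x then 1 else 0)"
        unfolding eq using fin2 by auto
    qed
    have "(\<Sum>z\<in>Y. card {y\<in>Y. E z y}) = card {y\<in>Y. E x y} + (\<Sum>z\<in>Y'. card {y\<in>Y. E z y})"
      using xY less.prems(1) Y'_def by (simp add: sum.remove)
    also have "(\<Sum>z\<in>Y'. card {y\<in>Y. E z y}) = (\<Sum>z\<in>Y'. card {y\<in>Y'. E z y}) + (\<Sum>z\<in>Y'. (if E z x then 1 else 0))"
      using split by (simp add: sum.distrib)
    also have "(\<Sum>z\<in>Y'. (if E z x then 1 else 0::nat)) = card {z\<in>Y'. E z x}"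
      using fin' by (simp add: sum.If_cases Collect_conj_eq Int_commute Collect_mem_eq)
    also have "{z\<in>Y'. E z x} = {y\<in>Y. E x y}"
      using Y'_def irr sym by blast
    finally have "(\<Sum>z\<in>Y. card {y\<in>Y. E z y}) = 2 * card {y\<in>Y. E x y} + (\<Sum>z\<in>Y'. card {y\<in>Y'. E z y})"
      by simp
    moreover have "card Y = Suc (card Y')" using xY less.prems(1) Y'_def
      by (metis card_Suc_Diff1)
    ultimately show ?thesis using IH dx by simp
  qed
qed



definition ext :: "('a \<Rightarrow> 'a \<Rightarrow> bool) \<Rightarrow> 'a set \<Rightarrow> ('a \<Rightarrow> nat option) \<Rightarrow> bool" where
  "ext E X h \<longleftrightarrow> (\<exists>\<chi>. (\<forall>x\<in>X. \<chi> x < 3) \<and> (\<forall>x\<in>X. \<forall>y\<in>X. E x y \<longrightarrow> \<chi> x \<noteq> \<chi> y)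
     \<and> (\<forall>x\<in>dom h. h x = Some (\<chi> x)))"

lemma reduce:
  assumes G: "graph V E"
  shows "finite Y \<Longrightarrow> Y \<subseteq> V \<Longrightarrow> dom h \<subseteq> Y \<Longrightarrow> acyc V E Y \<Longrightarrow>
    (\<forall>Z. dom h \<subseteq> Z \<and> Z \<subseteq> Y \<and> card Z \<le> 3 * card (dom h) \<longrightarrow> ext E Z h) \<Longrightarrow> ext E Y h"
proof (induction "card Y" arbitrary: Y rule: less_induct)
  case less
  have sym: "\<And>u v. E u v \<Longrightarrow> E v u" and irr: "\<And>v. \<not> E v v"
    using G unfolding graph_def by auto
  show ?case
  proof (cases "\<exists>x\<in>Y - dom h. card {y\<in>Y. E x y} \<le> 2")
    case True
    then obtain x where xY: "x \<in> Y" and xD: "x \<notin> dom h" and dx: "card {y\<in>Y. E x y} \<le> 2"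
      by blast
    define Y' where "Y' = Y - {x}"
    have fin': "finite Y'" using less.prems Y'_def by simp
    have lt: "card Y' < card Y" using xY less.prems(1) Y'_def by (metis card_Diff1_less)
    have "ext E Y' h"
      using less.hyps[OF lt fin'] less.prems acyc_mono[of V E Y Y'] Y'_def xD by blast
    then obtain \<chi> where c1: "\<forall>x\<in>Y'. \<chi> x < 3" and c2: "\<forall>x\<in>Y'. \<forall>y\<in>Y'. E x y \<longrightarrow> \<chi> x \<noteq> \<chi> y"
      and c3: "\<forall>x\<in>dom h. h x = Some (\<chi> x)" unfolding ext_def by blast
    have "card (\<chi> ` {y\<in>Y. E x y}) \<le> 2" using dx card_image_le[of "{y\<in>Y. E x y}" \<chi>] less.prems(1)
      by simp
    have "\<not> {0,1,2::nat} \<subseteq> \<chi> ` {y\<in>Y. E x y}"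
    proof (rule notI)
      assume sub: "{0,1,2::nat} \<subseteq> \<chi> ` {y\<in>Y. E x y}"
      have "finite (\<chi> ` {y\<in>Y. E x y})" using less.prems(1) by simp
      hence "card {0,1,2::nat} \<le> card (\<chi> ` {y\<in>Y. E x y})" using sub card_mono by blast
      thus False using \<open>card (\<chi> ` {y\<in>Y. E x y}) \<le> 2\<close> by simp
    qed
    then obtain c where cc: "c \<in> {0,1,2::nat}" and cn: "c \<notin> \<chi> ` {y\<in>Y. E x y}" by blast
    define \<chi>' where "\<chi>' = \<chi>(x := c)"
    show ?thesis unfolding ext_def
    proof (intro exI[of _ \<chi>'] conjI ballI impI)
      fix z assume "z \<in> Y" thus "\<chi>' z < 3" using c1 cc Y'_def \<chi>'_def by auto
    next
      fix u w assume u: "u \<in> Y" and w: "w \<in> Y" and e: "E u w"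
      show "\<chi>' u \<noteq> \<chi>' w"
      proof (cases "u = x")
        case True
        hence "w \<noteq> x" using e irr by auto
        thus ?thesis using True cn e w \<chi>'_def by auto
      next
        case False
        show ?thesis
        proof (cases "w = x")
          case True
          thus ?thesis using False cn sym[OF e] u \<chi>'_def by auto
        next
          case False2: False
          thus ?thesis using False c2 u w e Y'_def \<chi>'_def by auto
        qed
      qed
    next
      fix z assume "z \<in> dom h" thus "h z = Some (\<chi>' z)" using c3 xD \<chi>'_def by auto
    qed
  next
    case False
    hence d3: "\<forall>x\<in>Y - dom h. 3 \<le> card {y\<in>Y. E x y}" by force
    have "card Y \<le> 3 * card (dom h)"
    proof (cases "Y = {}")
      case True thus ?thesis by simp
    next
      case False
      have ds: "(\<Sum>x\<in>Y. card {y\<in>Y. E x y}) + 2 \<le> 2 * card Y"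
        using degsum[OF G less.prems(1,2) False less.prems(4)] .
      have "3 * card (Y - dom h) = (\<Sum>x\<in>Y - dom h. 3)" by simp
      also have "\<dots> \<le> (\<Sum>x\<in>Y - dom h. card {y\<in>Y. E x y})"
        using d3 by (intro sum_mono) auto
      also have "\<dots> \<le> (\<Sum>x\<in>Y. card {y\<in>Y. E x y})"
        using less.prems(1) by (intro sum_mono2) auto
      finally have "3 * card (Y - dom h) + 2 \<le> 2 * card Y" using ds by simp
      moreover have "card (Y - dom h) = card Y - card (dom h)"
        using less.prems(1,3) by (meson card_Diff_subset finite_subset)
      moreover have "card (dom h) \<le> card Y" using less.prems(1,3) card_mono by blast
      ultimately show ?thesis by linarith
    qed
    thus ?thesis using less.prems(3,5) by blast
  qed
qed



definition good :: "'a set \<Rightarrow> ('a \<Rightarrow> 'a \<Rightarrow> bool) \<Rightarrow> nat \<Rightarrow> ('a \<Rightarrow> nat option) \<Rightarrow> bool" where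
  "good V E k h \<longleftrightarrow> dom h \<subseteq> V \<and> card (dom h) \<le> k \<and>
     (\<forall>X. dom h \<subseteq> X \<and> X \<subseteq> V \<and> card (X - dom h) \<le> 2 * k \<longrightarrow> ext E X h)"

lemma chi_le3:
  assumes "\<forall>x\<in>V. (f x::nat) < 3" "\<forall>u\<in>V. \<forall>w\<in>V. E u w \<longrightarrow> f u \<noteq> f w"
  shows "chromatic_number V E \<le> 3"
  unfolding chromatic_number_def by (rule Least_le) (rule exI[of _ f], use assms in blast)

lemma good_proper: "good V E k h \<Longrightarrow> proper_partial E h"
proof -
  assume g: "good V E k h"
  hence "ext E (dom h) h" unfolding good_def by auto
  then obtain \<chi> where "\<forall>x\<in>dom h. \<forall>y\<in>dom h. E x y \<longrightarrow> \<chi> x \<noteq> \<chi> y"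
    and "\<forall>x\<in>dom h. h x = Some (\<chi> x)" unfolding ext_def by blast
  thus ?thesis unfolding proper_partial_def by auto
qed

lemma good_restrict:
  assumes G: "graph V E" and g: "good V E k h"
  shows "good V E k (h |` (- S))"
proof -
  have fV: "finite V" using G unfolding graph_def by auto
  have d: "dom (h |` (- S)) = dom h - S" by auto
  have D1: "dom h \<subseteq> V" and D2: "card (dom h) \<le> k" using g unfolding good_def by auto
  have "card (dom h - S) \<le> k" using D2 card_mono[of "dom h" "dom h - S"] D1 fV
    by (meson Diff_subset finite_subset le_trans)
  moreover have "\<forall>X. dom h - S \<subseteq> X \<and> X \<subseteq> V \<and> card (X - (dom h - S)) \<le> 2 * k \<longrightarrow> ext E X (h |` (- S))"
  proof (intro allI impI)
    fix X assume X: "dom h - S \<subseteq> X \<and> X \<subseteq> V \<and> card (X - (dom h - S)) \<le> 2 * k"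
    have "X \<union> dom h - dom h \<subseteq> X - (dom h - S)" by auto
    hence "card (X \<union> dom h - dom h) \<le> card (X - (dom h - S))"
      using X fV by (meson card_mono finite_Diff finite_subset)
    hence "ext E (X \<union> dom h) h" using g X D1 unfolding good_def by auto
    then obtain \<chi> where c1: "\<forall>x\<in>X \<union> dom h. \<chi> x < 3"
      and c2: "\<forall>x\<in>X \<union> dom h. \<forall>y\<in>X \<union> dom h. E x y \<longrightarrow> \<chi> x \<noteq> \<chi> y"
      and c3: "\<forall>x\<in>dom h. h x = Some (\<chi> x)" unfolding ext_def by blast
    show "ext E X (h |` (- S))" unfolding ext_def
      by (rule exI[of _ \<chi>]) (use c1 c2 c3 in auto)
  qed
  ultimately show ?thesis using D1 d unfolding good_def by auto
qed

lemma small_acyc: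
  assumes "finite Y" "card Y < girth V E" shows "acyc V E Y"
  unfolding acyc_def
proof (intro allI impI notI)
  fix cs assume cy: "is_cycle V E cs" and s: "set cs \<subseteq> Y"
  have "girth V E \<le> length cs" unfolding girth_def by (rule Least_le) (use cy in blast)
  moreover have "length cs = card (set cs)" using cy unfolding is_cycle_def
    by (simp add: distinct_card)
  moreover have "card (set cs) \<le> card Y" using s assms(1) card_mono by blast
  ultimately show False using assms(2) by simp
qed



lemma lt3: "(c::nat) < 3 \<Longrightarrow> c \<in> {0,1,2}"
  by (simp add: eval_nat_numeral less_Suc_eq)

lemma card4: "card (A \<union> B \<union> C \<union> D) \<le> card A + card B + card C + card D"
  using card_Un_le[of "A \<union> B \<union> C" D] card_Un_le[of "A \<union> B" C] card_Un_le[of A B] by linarith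

lemma forth:
  assumes G: "graph V E" and g: "good V E k h" and vV: "v \<in> V" and vD: "v \<notin> dom h"
    and ck: "card (insert v (dom h)) \<le> k" and gir: "16 * k \<le> girth V E"
  shows "\<exists>c\<in>{0,1,2::nat}. good V E k (h(v \<mapsto> c))"
proof (rule ccontr)
  assume nt: "\<not> ?thesis"
  have fV: "finite V" using G unfolding graph_def by auto
  have D1: "dom h \<subseteq> V" using g unfolding good_def by auto
  let ?I = "insert v (dom h)"
  have "\<forall>c\<in>{0,1,2::nat}. \<exists>X. ?I \<subseteq> X \<and> X \<subseteq> V \<and> card (X - ?I) \<le> 2 * k \<and> \<not> ext E X (h(v \<mapsto> c))"
  proof
    fix c :: nat assume c: "c \<in> {0,1,2}"
    hence "\<not> good V E k (h(v \<mapsto> c))" using nt by blast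
    thus "\<exists>X. ?I \<subseteq> X \<and> X \<subseteq> V \<and> card (X - ?I) \<le> 2 * k \<and> \<not> ext E X (h(v \<mapsto> c))"
      using D1 vV ck unfolding good_def by auto
  qed
  then obtain Xf where Xf: "\<forall>c\<in>{0,1,2::nat}. ?I \<subseteq> Xf c \<and> Xf c \<subseteq> V \<and> card (Xf c - ?I) \<le> 2 * k
       \<and> \<not> ext E (Xf c) (h(v \<mapsto> c))"
    by (rule bchoice[THEN exE]) blast
  define Y where "Y = Xf 0 \<union> Xf 1 \<union> Xf 2"
  have YV: "Y \<subseteq> V" using Xf Y_def by auto
  have fY: "finite Y" using YV fV finite_subset by blast
  have IY: "?I \<subseteq> Y" using Xf Y_def by auto
  have sY: "Y \<subseteq> ?I \<union> (Xf 0 - ?I) \<union> (Xf 1 - ?I) \<union> (Xf 2 - ?I)" using Y_def by auto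
  have "card Y \<le> card (?I \<union> (Xf 0 - ?I) \<union> (Xf 1 - ?I) \<union> (Xf 2 - ?I))"
  proof (rule card_mono)
    have "?I \<union> (Xf 0 - ?I) \<union> (Xf 1 - ?I) \<union> (Xf 2 - ?I) \<subseteq> V" using Xf D1 vV by auto
    thus "finite (?I \<union> (Xf 0 - ?I) \<union> (Xf 1 - ?I) \<union> (Xf 2 - ?I))" by (rule finite_subset[OF _ fV])
    show "Y \<subseteq> ?I \<union> (Xf 0 - ?I) \<union> (Xf 1 - ?I) \<union> (Xf 2 - ?I)" by (rule sY)
  qed
  also have "\<dots> \<le> card ?I + card (Xf 0 - ?I) + card (Xf 1 - ?I) + card (Xf 2 - ?I)"
    by (rule card4)
  also have "\<dots> \<le> k + 2*k + 2*k + 2*k" using Xf ck by (intro add_mono) auto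
  finally have cY: "card Y \<le> 7 * k" by simp
  have fI: "finite ?I" using fV D1 vV finite_subset by (metis insert_subset)
  hence "0 < card ?I" using card_gt_0_iff[of ?I] by blast
  hence "1 \<le> card ?I" by simp
  hence "1 \<le> k" using ck by simp
  hence "card Y < girth V E" using cY gir by linarith
  hence ac: "acyc V E Y" using small_acyc fY by blast
  have "ext E Y h"
  proof (rule reduce[OF G fY YV _ ac])
    show "dom h \<subseteq> Y" using IY by auto
    show "\<forall>Z. dom h \<subseteq> Z \<and> Z \<subseteq> Y \<and> card Z \<le> 3 * card (dom h) \<longrightarrow> ext E Z h"
    proof (intro allI impI)
      fix Z assume Z: "dom h \<subseteq> Z \<and> Z \<subseteq> Y \<and> card Z \<le> 3 * card (dom h)"
      have fZ: "finite Z" using Z fY finite_subset by blast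
      have "card (Z - dom h) = card Z - card (dom h)" using Z fZ
        by (meson card_Diff_subset finite_subset)
      also have "\<dots> \<le> 2 * card (dom h)" using Z by linarith
      also have "\<dots> \<le> 2 * k" using g unfolding good_def by simp
      finally show "ext E Z h" using g Z YV unfolding good_def by auto
    qed
  qed
  then obtain \<chi> where c1: "\<forall>x\<in>Y. \<chi> x < 3" and c2: "\<forall>x\<in>Y. \<forall>y\<in>Y. E x y \<longrightarrow> \<chi> x \<noteq> \<chi> y"
    and c3: "\<forall>x\<in>dom h. h x = Some (\<chi> x)" unfolding ext_def by blast
  have vY: "v \<in> Y" using IY by auto
  define c where "c = \<chi> v"
  have cc: "c \<in> {0,1,2}" using c1 vY c_def lt3 by auto
  have sub: "Xf c \<subseteq> Y" using cc Y_def by auto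
  have "ext E (Xf c) (h(v \<mapsto> c))" unfolding ext_def
  proof (intro exI[of _ \<chi>] conjI)
    show "\<forall>x\<in>Xf c. \<chi> x < 3" using c1 sub by blast
    show "\<forall>x\<in>Xf c. \<forall>y\<in>Xf c. E x y \<longrightarrow> \<chi> x \<noteq> \<chi> y" using c2 sub by blast
    show "\<forall>x\<in>dom (h(v \<mapsto> c)). (h(v \<mapsto> c)) x = Some (\<chi> x)" using c3 c_def by auto
  qed
  moreover have "\<not> ext E (Xf c) (h(v \<mapsto> c))" using bspec[OF Xf cc] by simp
  ultimately show False by contradiction
qed

lemma nowin:
  assumes G: "graph V E" and gir: "16 * k \<le> girth V E"
  shows "good V E k h \<Longrightarrow> \<not> spoiler_wins V E k r h"
proof (induction r arbitrary: h)
  case 0 thus ?case by simp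
next
  case (Suc r)
  show ?case
  proof
    assume "spoiler_wins V E k (Suc r) h"
    hence "\<exists>S v. S \<subseteq> dom h \<and> v \<in> V \<and> card (insert v (dom h - S)) \<le> k \<and>
        (\<forall>c \<in> {0, 1, 2::nat}. \<not> proper_partial E ((h |` (- S))(v \<mapsto> c)) \<or>
           spoiler_wins V E k r ((h |` (- S))(v \<mapsto> c)))" by (simp only: spoiler_wins.simps)
    then show False
    proof (elim exE conjE)
      fix S v assume S: "S \<subseteq> dom h" and vV: "v \<in> V" and ck: "card (insert v (dom h - S)) \<le> k"
      and all: "\<forall>c \<in> {0, 1, 2::nat}. \<not> proper_partial E ((h |` (- S))(v \<mapsto> c)) \<or>
           spoiler_wins V E k r ((h |` (- S))(v \<mapsto> c))"
    define h' where "h' = h |` (- S)"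
    have g': "good V E k h'" using good_restrict[OF G Suc.prems] h'_def by blast
    have d': "dom h' = dom h - S" using h'_def by auto
    have "\<exists>c\<in>{0,1,2::nat}. good V E k (h'(v \<mapsto> c))"
    proof (cases "v \<in> dom h'")
      case True
      have "ext E (dom h') h'" using g' unfolding good_def by auto
      then obtain \<chi> where "\<forall>x\<in>dom h'. \<chi> x < 3" "\<forall>x\<in>dom h'. h' x = Some (\<chi> x)"
        unfolding ext_def by blast
      hence "h' v = Some (\<chi> v)" "\<chi> v \<in> {0,1,2}" using True lt3 by auto
      hence "h'(v \<mapsto> \<chi> v) = h'" "\<chi> v \<in> {0,1,2}" by auto
      thus ?thesis using g' by metis
    next
      case False
      show ?thesis by (rule forth[OF G g' vV False _ gir]) (use ck d' in simp)
    qed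
    then obtain c where cc: "c \<in> {0,1,2::nat}" and gc: "good V E k (h'(v \<mapsto> c))" by blast
    have pc: "proper_partial E (h'(v \<mapsto> c))" by (rule good_proper[OF gc])
    have nw: "\<not> spoiler_wins V E k r (h'(v \<mapsto> c))" by (rule Suc.IH[OF gc])
    have "\<not> proper_partial E (h'(v \<mapsto> c)) \<or> spoiler_wins V E k r (h'(v \<mapsto> c))"
      using bspec[OF all cc] unfolding h'_def .
    thus False using pc nw by blast
  qed
  qed
qed

lemma restr_empty: "(m |` (- {})) = m"
  by (auto simp: restrict_map_def)

lemma spoiler_exists:
  assumes G: "graph V E" and chi: "chromatic_number V E > 3"
  shows "\<forall>p. card (V - dom p) = n \<longrightarrow> dom p \<subseteq> V \<longrightarrow> (\<forall>x\<in>dom p. the (p x) < 3) \<longrightarrow>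
      spoiler_wins V E (card V) (Suc n) p"
proof (induction n)
  have fV: "finite V" using G unfolding graph_def by auto
  case 0
  show ?case
  proof (intro allI impI)
    fix p :: "'a \<Rightarrow> nat option"
    assume a: "card (V - dom p) = 0" "dom p \<subseteq> V" "\<forall>x\<in>dom p. the (p x) < 3"
    have dV: "dom p = V" using a fV by auto
    have "V \<noteq> {}"
    proof
      assume "V = {}"
      hence "chromatic_number V E \<le> 3" by (intro chi_le3[of V "\<lambda>_. 0"]) auto
      thus False using chi by simp
    qed
    then obtain v where vV: "v \<in> V" by blast
    have allc: "\<forall>c\<in>{0,1,2::nat}. \<not> proper_partial E (p(v \<mapsto> c))"
    proof (intro ballI notI)
      fix c :: nat assume c: "c \<in> {0,1,2}" and pp: "proper_partial E (p(v \<mapsto> c))"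
      let ?q = "p(v \<mapsto> c)"
      have dq: "dom ?q = V" using dV vV by auto
      have "chromatic_number V E \<le> 3"
      proof (rule chi_le3[of V "\<lambda>x. the (?q x)"])
        show "\<forall>x\<in>V. the (?q x) < 3" using a(3) dV c by auto
        show "\<forall>u\<in>V. \<forall>w\<in>V. E u w \<longrightarrow> the (?q u) \<noteq> the (?q w)"
        proof (intro ballI impI)
          fix u w assume u: "u \<in> V" and w: "w \<in> V" and e: "E u w"
          have "?q u \<noteq> ?q w" using pp u w e dq unfolding proper_partial_def by blast
          moreover have "u \<in> dom ?q" "w \<in> dom ?q" using u w dq by auto
          ultimately show "the (?q u) \<noteq> the (?q w)" by auto
        qed
      qed
      thus False using chi by simp
    qed
    have "card (insert v (dom p - {})) \<le> card V" using dV vV by (simp add: insert_absorb)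
    have "\<exists>S v. S \<subseteq> dom p \<and> v \<in> V \<and> card (insert v (dom p - S)) \<le> card V \<and>
        (\<forall>c \<in> {0, 1, 2::nat}. \<not> proper_partial E ((p |` (- S))(v \<mapsto> c)) \<or>
           spoiler_wins V E (card V) 0 ((p |` (- S))(v \<mapsto> c)))"
    proof (intro exI[of _ "{}"] exI[of _ v] conjI)
      show "{} \<subseteq> dom p" by simp
      show "v \<in> V" by (rule vV)
      show "card (insert v (dom p - {})) \<le> card V" by fact
      show "\<forall>c \<in> {0, 1, 2::nat}. \<not> proper_partial E ((p |` (- {}))(v \<mapsto> c)) \<or> spoiler_wins V E (card V) 0 ((p |` (- {}))(v \<mapsto> c))"
        unfolding restr_empty using allc by blast
    qed
    thus "spoiler_wins V E (card V) (Suc 0) p" by (simp only: spoiler_wins.simps)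
  qed
next
  have fV: "finite V" using G unfolding graph_def by auto
  case (Suc m)
  show ?case
  proof (intro allI impI)
    fix p :: "'a \<Rightarrow> nat option"
    assume a: "card (V - dom p) = Suc m" "dom p \<subseteq> V" "\<forall>x\<in>dom p. the (p x) < 3"
    have "V - dom p \<noteq> {}" by (metis a(1) card.empty Zero_not_Suc)
    then obtain v where vV: "v \<in> V" and vp: "v \<notin> dom p" by blast
    have allc: "\<forall>c\<in>{0,1,2::nat}. spoiler_wins V E (card V) (Suc m) (p(v \<mapsto> c))"
    proof
      fix c :: nat assume c: "c \<in> {0,1,2}"
      have "V - dom (p(v \<mapsto> c)) = (V - dom p) - {v}" by auto
      hence "card (V - dom (p(v \<mapsto> c))) = m" using a(1) vV vp fV by simp
      moreover have "dom (p(v \<mapsto> c)) \<subseteq> V" using a(2) vV by auto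
      moreover have "\<forall>x\<in>dom (p(v \<mapsto> c)). the ((p(v \<mapsto> c)) x) < 3" using a(3) c by auto
      ultimately show "spoiler_wins V E (card V) (Suc m) (p(v \<mapsto> c))" using Suc.IH by blast
    qed
    have "card (insert v (dom p - {})) \<le> card V"
      using a(2) vV fV by (simp add: card_mono)
    have "\<exists>S v. S \<subseteq> dom p \<and> v \<in> V \<and> card (insert v (dom p - S)) \<le> card V \<and>
        (\<forall>c \<in> {0, 1, 2::nat}. \<not> proper_partial E ((p |` (- S))(v \<mapsto> c)) \<or>
           spoiler_wins V E (card V) (Suc m) ((p |` (- S))(v \<mapsto> c)))"
    proof (intro exI[of _ "{}"] exI[of _ v] conjI)
      show "{} \<subseteq> dom p" by simp
      show "v \<in> V" by (rule vV)
      show "card (insert v (dom p - {})) \<le> card V" by fact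
      show "\<forall>c \<in> {0, 1, 2::nat}. \<not> proper_partial E ((p |` (- {}))(v \<mapsto> c)) \<or> spoiler_wins V E (card V) (Suc m) ((p |` (- {}))(v \<mapsto> c))"
        unfolding restr_empty using allc by blast
    qed
    thus "spoiler_wins V E (card V) (Suc (Suc m)) p" by (simp only: spoiler_wins.simps)
  qed
qed



lemma ext_empty:
  assumes G: "graph V E" and fX: "finite X" and XV: "X \<subseteq> V" and ac: "acyc V E X"
  shows "ext E X Map.empty"
proof (rule reduce[OF G fX XV _ ac])
  show "dom Map.empty \<subseteq> X" by simp
  show "\<forall>Z. dom Map.empty \<subseteq> Z \<and> Z \<subseteq> X \<and> card Z \<le> 3 * card (dom (Map.empty :: 'a \<Rightarrow> nat option))
      \<longrightarrow> ext E Z Map.empty"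
  proof (intro allI impI)
    fix Z :: "'a set" assume Z: "dom Map.empty \<subseteq> Z \<and> Z \<subseteq> X \<and> card Z \<le> 3 * card (dom (Map.empty :: 'a \<Rightarrow> nat option))"
    have "finite Z" using Z fX finite_subset by blast
    hence "Z = {}" using Z by simp
    thus "ext E Z Map.empty" unfolding ext_def by simp
  qed
qed

theorem theorem4:
  fixes V :: "'a set" and E :: "'a \<Rightarrow> 'a \<Rightarrow> bool"
  assumes "graph V E" and "chromatic_number V E > 3"
  shows "real (W V E) > real (girth V E) / 16"
proof -
  note G = assms(1)
  have fV: "finite V" using G unfolding graph_def by auto
  have cyc: "\<exists>cs. is_cycle V E cs"
  proof (rule ccontr)
    assume nc: "\<not> ?thesis"
    hence ac: "acyc V E V" unfolding acyc_def by blast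
    have "ext E V Map.empty" by (rule ext_empty[OF G fV subset_refl ac])
    then obtain \<chi> :: "'a \<Rightarrow> nat" where c1: "\<forall>x\<in>V. \<chi> x < 3" and c2: "\<forall>x\<in>V. \<forall>y\<in>V. E x y \<longrightarrow> \<chi> x \<noteq> \<chi> y"
      unfolding ext_def by blast
    have "chromatic_number V E \<le> 3" by (rule chi_le3[OF c1 c2])
    thus False using assms(2) by simp
  qed
  hence "\<exists>n cs. is_cycle V E cs \<and> length cs = n" by blast
  hence "\<exists>cs. is_cycle V E cs \<and> length cs = girth V E" unfolding girth_def by (rule LeastI_ex)
  hence g3: "3 \<le> girth V E" unfolding is_cycle_def by auto
  have "spoiler_wins V E (card V) (Suc (card V)) Map.empty"
  proof -
    have "card (V - dom (Map.empty :: 'a \<Rightarrow> nat option)) = card V" by simp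
    moreover have "dom (Map.empty :: 'a \<Rightarrow> nat option) \<subseteq> V" by simp
    moreover have "\<forall>x\<in>dom (Map.empty :: 'a \<Rightarrow> nat option). the (Map.empty x) < (3::nat)" by simp
    ultimately show ?thesis using spoiler_exists[OF G assms(2), of "card V"] by blast
  qed
  hence "\<exists>k r. spoiler_wins V E k r Map.empty" by blast
  hence "\<exists>r. spoiler_wins V E (W V E) r Map.empty" unfolding W_def by (rule LeastI_ex)
  then obtain r where sw: "spoiler_wins V E (W V E) r Map.empty" by blast
  show ?thesis
  proof (rule ccontr)
    assume "\<not> ?thesis"
    hence "real (16 * W V E) \<le> real (girth V E)" by simp
    hence le: "16 * W V E \<le> girth V E" by linarith
    have "good V E (W V E) Map.empty" unfolding good_def
    proof (intro conjI allI impI)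
      fix X assume X: "dom Map.empty \<subseteq> X \<and> X \<subseteq> V \<and> card (X - dom Map.empty) \<le> 2 * W V E"
      have fX: "finite X" using X fV finite_subset by blast
      have "card X < girth V E" using X le g3 by simp
      hence "acyc V E X" using small_acyc fX by blast
      thus "ext E X Map.empty" using ext_empty[OF G fX] X by blast
    qed simp_all
    thus False using nowin[OF G le] sw by blast
  qed
qed

end
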